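(* For each $n\geq 2$ there is a domain $D$ in $\mathbb{R}^n$ such that $\mathbb{R}^n\setminus D$ contains at least two points and there exists $z\in D$ with $$\lambda''_D(z)<\lambda'_D(z)<\lambda_D(z).$$
   Context: Write $d(z,\partial D)=\inf\{|z-a|:a\in\partial D\}$ and $Q(z;a,b)=|z-a|\big(1+\big|\log\frac{|a-b|}{|z-a|}\big|\big)$ (equal to $+\infty$ when $a=b$). For a domain $D\subset\mathbb{R}^n$ whose complement contains at least two points and $z\in D$ define $1/\lambda_D(z)=\inf\{Q(z;a,b): a,b\in\mathbb{R}^n\setminus D\}$, $1/\lambda'_D(z)=\inf\{Q(z;a,b): a,b\in\partial D\}$, $1/\lambda''_D(z)=\inf\{Q(z;a,b): a,b\in\partial D,\ |z-a|=d(z,\partial D)\}$. *)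

theory Defs
  imports "HOL-Analysis.Analysis"
begin

definition is_domain :: "'a::topological_space set \<Rightarrow> bool" where
  "is_domain D \<longleftrightarrow> open D \<and> connected D \<and> D \<noteq> {}"

definition Qfun :: "'a::real_normed_vector \<Rightarrow> 'a \<Rightarrow> 'a \<Rightarrow> ereal" where
  "Qfun z a b = (if a = b then \<infinity>
     else ereal (dist z a * (1 + \<bar>ln (dist a b / dist z a)\<bar>)))"

text \<open>The reciprocals 1/lambda, 1/lambda', 1/lambda'' as infima (in the extended reals).\<close>
definition inv_lam :: "'a::real_normed_vector set \<Rightarrow> 'a \<Rightarrow> ereal" where
  "inv_lam D z = (INF p \<in> {(a,b). a \<in> - D \<and> b \<in> - D}. Qfun z (fst p) (snd p))"

definition inv_lam' :: "'a::real_normed_vector set \<Rightarrow> 'a \<Rightarrow> ereal" where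
  "inv_lam' D z = (INF p \<in> {(a,b). a \<in> frontier D \<and> b \<in> frontier D}. Qfun z (fst p) (snd p))"

definition inv_lam'' :: "'a::real_normed_vector set \<Rightarrow> 'a \<Rightarrow> ereal" where
  "inv_lam'' D z = (INF p \<in> {(a,b). a \<in> frontier D \<and> b \<in> frontier D
        \<and> dist z a = infdist z (frontier D)}. Qfun z (fst p) (snd p))"

definition lam :: "'a::real_normed_vector set \<Rightarrow> 'a \<Rightarrow> ereal" where
  "lam D z = 1 / inv_lam D z"

definition lam' :: "'a::real_normed_vector set \<Rightarrow> 'a \<Rightarrow> ereal" where
  "lam' D z = 1 / inv_lam' D z"

definition lam'' :: "'a::real_normed_vector set \<Rightarrow> 'a \<Rightarrow> ereal" where
  "lam'' D z = 1 / inv_lam'' D z"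

end

theory Submission
  imports Defs
begin

lemma ln_lb: "0 < (t::real) \<Longrightarrow> 1 - 1/t \<le> ln t"
  using ln_le_minus_one[of "1/t"] by (simp add: ln_div)

lemma Q_ge1:
  assumes "a \<noteq> b" "0 < dist z a"
  shows "ereal (dist z a) \<le> Qfun z a b"
  using assms by (simp add: Qfun_def)

lemma Q_ge2:
  assumes "a \<noteq> b" "0 < dist z a"
  shows "ereal (2*dist z a - dist a b) \<le> Qfun z a b"
proof -
  have d: "0 < dist a b" using assms by simp
  have "1 - dist a b / dist z a \<le> ln (dist z a / dist a b)"
    using ln_lb[of "dist z a / dist a b"] d assms by simp
  also have "\<dots> = - ln (dist a b / dist z a)" using d assms by (simp add: ln_div)
  also have "\<dots> \<le> \<bar>ln (dist a b / dist z a)\<bar>" by simp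
  finally have "dist z a * (1 - dist a b / dist z a) \<le> dist z a * \<bar>ln (dist a b / dist z a)\<bar>"
    using assms by (intro mult_left_mono) auto
  hence "2*dist z a - dist a b \<le> dist z a * (1 + \<bar>ln (dist a b / dist z a)\<bar>)"
    using assms by (simp add: algebra_simps)
  thus ?thesis using assms by (simp add: Qfun_def)
qed

lemma Q_ge3:
  assumes "a \<noteq> b" "0 < dist z a"
  shows "ereal (dist z a * (2 - dist z a / dist a b)) \<le> Qfun z a b"
proof -
  have d: "0 < dist a b" using assms by simp
  have "1 - dist z a / dist a b \<le> ln (dist a b / dist z a)"
    using ln_lb[of "dist a b / dist z a"] d assms by simp
  also have "\<dots> \<le> \<bar>ln (dist a b / dist z a)\<bar>" by simp
  finally have "dist z a * (1 - dist z a / dist a b) \<le> dist z a * \<bar>ln (dist a b / dist z a)\<bar>"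
    using assms by (intro mult_left_mono) auto
  hence "dist z a * (2 - dist z a / dist a b) \<le> dist z a * (1 + \<bar>ln (dist a b / dist z a)\<bar>)"
    using assms by (simp add: algebra_simps)
  thus ?thesis using assms by (simp add: Qfun_def)
qed

lemma Q_eq:
  assumes "a \<noteq> b" "0 < dist z a" "dist a b = dist z a"
  shows "Qfun z a b = ereal (dist z a)"
  using assms by (simp add: Qfun_def)

lemma sq_ge: fixes x y :: real shows "y \<ge> 0 \<Longrightarrow> x \<ge> 0 \<Longrightarrow> y^2 \<le> x^2 \<Longrightarrow> y \<le> x" 
  by (simp add: power_mono_iff)

lemma poly1: fixes \<alpha> \<beta> :: real assumes "\<alpha>\<ge>4/5" "\<alpha> < 101/100" "\<beta> > 0" "\<alpha>^2+\<beta>^2 = 52/25"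
 shows "\<alpha>*(2*\<beta> - \<alpha>) \<ge> 101/100*\<beta>"
proof (cases "\<alpha> \<le> 92/100")
  case True
  have "\<alpha>*\<alpha> \<le> 92/100*(92/100)" using True assms by (intro mult_mono) auto
  hence "\<beta>^2 \<ge> (11/10)^2" using assms by (simp add: power2_eq_square)
  hence b: "\<beta> \<ge> 11/10" using assms sq_ge by smt
  have "\<beta>*(2*\<alpha>-101/100) \<ge> 11/10*(2*\<alpha>-101/100)" using b assms by (intro mult_right_mono) auto
  moreover have "(\<alpha> - 4/5)*(\<alpha> - 14/10) \<le> 0" using assms True by (intro mult_nonneg_nonpos) auto
  ultimately show ?thesis by (simp add: algebra_simps power2_eq_square)
next
  case False
  have "\<alpha>*\<alpha> \<le> 101/100*(101/100)" using False assms by (intro mult_mono) auto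
  hence "\<beta>^2 \<ge> (102/100)^2" using assms by (simp add: power2_eq_square)
  hence b: "\<beta> \<ge> 102/100" using assms sq_ge by smt
  have "\<beta>*(2*\<alpha>-101/100) \<ge> 102/100*(2*\<alpha>-101/100)" using b assms by (intro mult_right_mono) auto
  moreover have "(\<alpha> - 92/100)*(\<alpha> - 112/100) \<le> 0" using assms False by (intro mult_nonneg_nonpos) auto
  ultimately show ?thesis by (simp add: algebra_simps power2_eq_square)
qed

lemma para:
  fixes a c :: "'a::real_inner"
  assumes "norm c = 1" "norm (a - c) = r"
  shows "(norm a)^2 + (norm (a - 2 *\<^sub>R c))^2 = 2 + 2*r^2"
proof -
  have "(norm (a - c))^2 = (norm a)^2 - 2*(a \<bullet> c) + (norm c)^2"
    by (simp add: power2_norm_eq_inner algebra_simps inner_commute)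
  moreover have "(norm (a - 2 *\<^sub>R c))^2 = (norm a)^2 - 4*(a \<bullet> c) + 4*(norm c)^2"
    by (simp add: power2_norm_eq_inner algebra_simps inner_commute)
  ultimately show ?thesis using assms by simp
qed

lemma etrans: "x \<le> y \<Longrightarrow> ereal y \<le> Q \<Longrightarrow> ereal x \<le> Q"
  by (meson ereal_less_eq(3) order_trans)

lemma sphere_facts:
  fixes c :: "'a::real_normed_vector"
  assumes "norm c = 1" "a \<in> sphere c (1/5)"
  shows "4/5 \<le> norm a" "norm a \<le> 6/5" "a \<noteq> 2 *\<^sub>R c" "norm (a - c) = 1/5"
proof -
  have d: "norm (c - a) = 1/5" using assms by (simp add: dist_norm)
  thus "norm (a - c) = 1/5" by (simp add: norm_minus_commute)
  show "4/5 \<le> norm a" using norm_triangle_ineq2[of c a] d assms by simp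
  show "norm a \<le> 6/5" using norm_triangle_ineq2[of a c] d assms by (simp add: norm_minus_commute)
  show "a \<noteq> 2 *\<^sub>R c"
  proof
    assume "a = 2 *\<^sub>R c"
    hence "c - a = - c" by (simp add: algebra_simps scaleR_2)
    hence "norm (c - a) = 1" using assms by simp
    thus False using d by simp
  qed
qed

lemma sphere_dist:
  fixes c :: "'a::real_normed_vector"
  assumes "a \<in> sphere c (1/5)" "b \<in> sphere c (1/5)"
  shows "dist a b \<le> 2/5"
  using dist_triangle[of a b c] assms by (simp add: dist_commute)

lemma pair_lb:
  fixes c :: "'a::real_inner"
  assumes c: "norm c = 1" and a: "a \<in> sphere c (1/5) \<union> {2 *\<^sub>R c}" and b: "b \<in> sphere c (1/5) \<union> {2 *\<^sub>R c}"
  shows "ereal (101/100) \<le> Qfun 0 a b"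
proof (cases "a = b")
  case True thus ?thesis by (simp add: Qfun_def)
next
  case ab: False
  show ?thesis
  proof (cases "a = 2 *\<^sub>R c")
    case True
    hence "dist 0 a = 2" using c by simp
    thus ?thesis by (intro etrans[OF _ Q_ge1[OF ab]]) auto
  next
    case False
    hence as: "a \<in> sphere c (1/5)" using a by auto
    note af = sphere_facts[OF c as]
    have da: "dist 0 a = norm a" by simp
    have pa: "0 < dist 0 a" using af(1) da by linarith
    show ?thesis
    proof (cases "b = 2 *\<^sub>R c")
      case False
      hence bs: "b \<in> sphere c (1/5)" using b by auto
      have "dist a b \<le> 2/5" using sphere_dist[OF as bs] .
      hence "101/100 \<le> 2*dist 0 a - dist a b" using af da by simp
      note h = this
      show ?thesis by (rule etrans[OF _ Q_ge2[OF ab pa]]) (use h da  in simp)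
    next
      case True
      have p: "(norm a)^2 + (norm (a - 2 *\<^sub>R c))^2 = 52/25"
        using para[OF c af(4)] by (simp add: power2_eq_square)
      have db: "dist a b = norm (a - 2 *\<^sub>R c)" using True by (simp add: dist_norm)
      have bp: "0 < norm (a - 2 *\<^sub>R c)" using af(3) by simp
      show ?thesis
      proof (cases "norm a \<ge> 101/100")
        case True
        show ?thesis by (rule etrans[OF _ Q_ge1[OF ab pa]]) (use True da in simp)
      next
        case False
        have "101/100 * norm (a - 2 *\<^sub>R c) \<le> norm a * (2 * norm (a - 2 *\<^sub>R c) - norm a)"
          using poly1[OF af(1) _ bp p] False by simp
        hence "101/100 \<le> norm a * (2 - norm a / norm (a - 2 *\<^sub>R c))"
          using bp by (simp add: field_simps)
        note h = this
        show ?thesis by (rule etrans[OF _ Q_ge3[OF ab pa]]) (use h da db in simp)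
      qed
    qed
  qed
qed

lemma pair_lb2:
  fixes c :: "'a::real_inner"
  assumes c: "norm c = 1" and a: "a \<in> sphere c (1/5) \<union> {2 *\<^sub>R c}" and b: "b \<in> sphere c (1/5) \<union> {2 *\<^sub>R c}"
    and na: "norm a = 4/5"
  shows "ereal (16/15) \<le> Qfun 0 a b"
proof (cases "a = b")
  case True thus ?thesis by (simp add: Qfun_def)
next
  case ab: False
  have "a \<noteq> 2 *\<^sub>R c" using na c by auto
  hence as: "a \<in> sphere c (1/5)" using a by auto
  note af = sphere_facts[OF c as]
  have da: "dist 0 a = norm a" by simp
  have pa: "0 < dist 0 a" using af(1) da by linarith
  show ?thesis
  proof (cases "b = 2 *\<^sub>R c")
    case False
    hence bs: "b \<in> sphere c (1/5)" using b by auto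
    have "dist a b \<le> 2/5" using sphere_dist[OF as bs] .
    hence "16/15 \<le> 2*dist 0 a - dist a b" using na da by simp
    note h = this
    show ?thesis by (rule etrans[OF _ Q_ge2[OF ab pa]]) (use h da  in simp)
  next
    case True
    have p: "(norm a)^2 + (norm (a - 2 *\<^sub>R c))^2 = 52/25"
      using para[OF c af(4)] by (simp add: power2_eq_square)
    hence "(norm (a - 2 *\<^sub>R c))^2 = (6/5)^2" using na by (simp add: power2_eq_square)
    hence n6: "norm (a - 2 *\<^sub>R c) = 6/5" using norm_ge_zero[of "a - 2 *\<^sub>R c"] by (auto simp: power2_eq_iff)
    have db: "dist a b = 6/5" using True n6 by (simp add: dist_norm)
    have "16/15 = norm a * (2 - norm a / (6/5))" using na by simp
    note h = this
    show ?thesis by (rule etrans[OF _ Q_ge3[OF ab pa]]) (unfold da db na, simp)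
  qed
qed


lemma frontier_sphere_mem:
  fixes c :: "'a::real_normed_vector"
  assumes c: "norm c = 1" and x: "x \<in> sphere c (1/5)"
  shows "x \<in> frontier (- (cball c (1/5) \<union> {2 *\<^sub>R c}))"
  unfolding frontier_straddle
proof (intro allI impI conjI)
  fix e :: real assume e: "e > 0"
  define t where "t = min (1/2) (e/2)"
  have t: "0 < t" "t \<le> 1/2" "t < e" using e by (auto simp: t_def)
  define y where "y = x + t *\<^sub>R (x - c)"
  have nx: "norm (x - c) = 1/5" using sphere_facts[OF c x] by simp
  have "y - c = (1 + t) *\<^sub>R (x - c)" by (simp add: y_def algebra_simps)
  hence ny: "norm (y - c) = (1 + t) / 5" using t nx by simp
  have "y \<notin> cball c (1/5)" using ny t by (simp add: dist_norm norm_minus_commute)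
  moreover have "y \<noteq> 2 *\<^sub>R c"
  proof
    assume "y = 2 *\<^sub>R c"
    hence "y - c = c" by (simp add: scaleR_2)
    thus False using ny c t by simp
  qed
  moreover have "dist x y = t/5" using t nx by (simp add: y_def dist_norm)
  hence "dist x y < e" using t by simp
  ultimately show "\<exists>y\<in>- (cball c (1/5) \<union> {2 *\<^sub>R c}). dist x y < e" by auto
  show "\<exists>y. y \<notin> - (cball c (1/5) \<union> {2 *\<^sub>R c}) \<and> dist x y < e"
    using x e by (intro exI[of _ x]) auto
qed

lemma frontier_q_mem:
  fixes c :: "'a::real_normed_vector"
  assumes c: "norm c = 1"
  shows "2 *\<^sub>R c \<in> frontier (- (cball c (1/5) \<union> {2 *\<^sub>R c}))"
  unfolding frontier_straddle
proof (intro allI impI conjI)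
  fix e :: real assume e: "e > 0"
  define t where "t = min (1/2) (e/2)"
  have t: "0 < t" "t \<le> 1/2" "t < e" using e by (auto simp: t_def)
  define y where "y = 2 *\<^sub>R c + t *\<^sub>R c"
  have "y - c = (1 + t) *\<^sub>R c" by (simp add: y_def algebra_simps scaleR_2)
  hence ny: "norm (y - c) = 1 + t" using t c by simp
  have "y \<notin> cball c (1/5)" using ny t by (simp add: dist_norm norm_minus_commute)
  moreover have "y \<noteq> 2 *\<^sub>R c"
  proof
    assume "y = 2 *\<^sub>R c"
    hence "y - c = c" by (simp add: scaleR_2)
    thus False using ny c t by simp
  qed
  moreover have "dist (2 *\<^sub>R c) y < e" using t c by (simp add: y_def dist_norm)
  ultimately show "\<exists>y\<in>- (cball c (1/5) \<union> {2 *\<^sub>R c}). dist (2 *\<^sub>R c) y < e" by auto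
  show "\<exists>y. y \<notin> - (cball c (1/5) \<union> {2 *\<^sub>R c}) \<and> dist (2 *\<^sub>R c) y < e"
    using e by (intro exI[of _ "2 *\<^sub>R c"]) auto
qed

lemma frontier_sub:
  fixes c :: "'a::euclidean_space"
  shows "frontier (- (cball c (1/5) \<union> {2 *\<^sub>R c})) \<subseteq> sphere c (1/5) \<union> {2 *\<^sub>R c}"
proof -
  have "frontier (- (cball c (1/5) \<union> {2 *\<^sub>R c})) = frontier (cball c (1/5) \<union> {2 *\<^sub>R c})" by simp
  also have "\<dots> \<subseteq> frontier (cball c (1/5)) \<union> frontier {2 *\<^sub>R c}" by (rule frontier_Un_subset)
  also have "\<dots> \<subseteq> sphere c (1/5) \<union> {2 *\<^sub>R c}"
    using frontier_subset_closed[of "{2 *\<^sub>R c}"] by auto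
  finally show ?thesis .
qed

theorem lemma3:
  assumes "CARD('n::finite) \<ge> 2"
  shows "\<exists>D :: (real^'n) set. is_domain D \<and> (\<exists>a b. a \<notin> D \<and> b \<notin> D \<and> a \<noteq> b) \<and>
           (\<exists>z\<in>D. lam'' D z < lam' D z \<and> lam' D z < lam D z)"
proof -
  obtain i1 i2 :: 'n where i12: "i1 \<noteq> i2"
  proof -
    have "\<not> (\<forall>i j::'n. i = j)"
    proof
      assume "\<forall>i j::'n. i = j"
      hence "(UNIV::'n set) \<subseteq> {undefined}" by auto
      hence "CARD('n) \<le> 1" by (metis card.empty card_insert_disjoint card_mono empty_iff finite.emptyI finite.insertI One_nat_def)
      thus False using assms by simp
    qed
    thus ?thesis using that by blast
  qed
  define c :: "real^'n" where "c = axis i1 1"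
  define e2 :: "real^'n" where "e2 = axis i2 1"
  define q where "q = 2 *\<^sub>R c"
  define D where "D = - (cball c (1/5) \<union> {q})"
  have nc: "norm c = 1" by (simp add: c_def norm_axis_1)
  have ne2: "norm e2 = 1" by (simp add: e2_def norm_axis_1)
  have ce2: "c \<bullet> e2 = 0" using i12 by (simp add: c_def e2_def inner_axis_axis)
  have FD: "frontier D \<subseteq> sphere c (1/5) \<union> {q}" unfolding D_def q_def by (rule frontier_sub)
  have dimn: "2 \<le> DIM(real^'n)" using assms by simp
  have "D = (- cball c (1/5)) - {q}" by (auto simp: D_def)
  moreover have "connected (- cball c (1/5))"
    by (rule connected_complement_bounded_convex) (use dimn in auto)
  ultimately have conD: "connected D"
    by (metis connected_open_delete open_Compl closed_cball dimn)
  have openD: "open D" unfolding D_def by (intro open_Compl closed_Un) auto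
  have zD: "0 \<in> D" using nc by (auto simp: D_def q_def)
  have dom: "is_domain D" using conD openD zD by (auto simp: is_domain_def)
  have nq: "norm q = 2" using nc by (simp add: q_def)
  have cq: "c \<noteq> q" using nc nq by auto
  have cnD: "c \<notin> D" "q \<notin> D" by (auto simp: D_def)
  have dcq: "dist c q = 1" using nc by (simp add: q_def dist_norm scaleR_2)
  have il: "inv_lam D 0 \<le> 1"
  proof -
    have "inv_lam D 0 \<le> Qfun 0 c q" unfolding inv_lam_def
      by (rule INF_lower2[of "(c,q)"]) (use cnD in auto)
    also have "\<dots> = 1" using nc cq dcq by (simp add: Qfun_def)
    finally show ?thesis .
  qed
  have il0: "0 \<le> inv_lam D 0" unfolding inv_lam_def
    by (rule INF_greatest) (auto simp: Qfun_def)
  have il'lb: "ereal (101/100) \<le> inv_lam' D 0" unfolding inv_lam'_def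
  proof (rule INF_greatest)
    fix p assume "p \<in> {(a, b). a \<in> frontier D \<and> b \<in> frontier D}"
    hence "fst p \<in> sphere c (1/5) \<union> {2 *\<^sub>R c}" "snd p \<in> sphere c (1/5) \<union> {2 *\<^sub>R c}"
      using FD by (auto simp: q_def)
    thus "ereal (101/100) \<le> Qfun 0 (fst p) (snd p)" using pair_lb[OF nc] by blast
  qed
  define a' where "a' = c + (1/5) *\<^sub>R e2"
  have "norm (a' - c) = 1/5" using ne2 by (simp add: a'_def)
  hence a's: "a' \<in> sphere c (1/5)" by (simp add: dist_norm norm_minus_commute)
  have na'2: "(norm a')^2 = 26/25"
    using nc ne2 ce2 by (simp add: a'_def power2_norm_eq_inner algebra_simps inner_commute norm_eq_1)
  have "(norm a')^2 + (norm (a' - q))^2 = 2 + 2*(1/5)^2"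
    unfolding q_def by (rule para[OF nc]) (simp add: a'_def ne2)
  hence "(norm (a' - q))^2 = (norm a')^2" using na'2 by (simp add: power2_eq_square)
  hence "norm (a' - q) = norm a'" using power2_eq_iff_nonneg norm_ge_zero by blast
  hence daq: "dist a' q = dist 0 a'" by (simp add: dist_norm)
  have a'q: "a' \<noteq> q" using sphere_facts[OF nc a's] by (simp add: q_def)
  have na'pos: "0 < norm a'" using sphere_facts(1)[OF nc a's] by linarith
  have na'lt: "norm a' < 102/100"
  proof -
    have "(norm a')^2 < (102/100)^2" unfolding na'2 by (simp add: power2_eq_square)
    thus ?thesis using power_less_imp_less_base[of "norm a'" 2 "102/100"] by simp
  qed
  have il'ub: "inv_lam' D 0 \<le> ereal (norm a')"
  proof -
    have "a' \<in> frontier D" unfolding D_def q_def by (rule frontier_sphere_mem[OF nc a's])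
    moreover have "q \<in> frontier D" unfolding D_def q_def by (rule frontier_q_mem[OF nc])
    ultimately have "inv_lam' D 0 \<le> Qfun 0 a' q" unfolding inv_lam'_def
      by (intro INF_lower2[of "(a',q)"]) auto
    also have "\<dots> = ereal (dist 0 a')" by (rule Q_eq[OF a'q]) (use na'pos daq in auto)
    finally show ?thesis by simp
  qed
  define a0 where "a0 = (4/5::real) *\<^sub>R c"
  have "a0 - c = (4/5 - 1::real) *\<^sub>R c" by (simp only: a0_def scaleR_diff_left scaleR_one)
  hence "norm (a0 - c) = 1/5" using nc by simp
  hence a0s: "a0 \<in> sphere c (1/5)" by (simp add: dist_norm norm_minus_commute)
  have a0F: "a0 \<in> frontier D" unfolding D_def q_def by (rule frontier_sphere_mem[OF nc a0s])
  have id: "infdist 0 (frontier D) \<le> 4/5"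
    using infdist_le[OF a0F, of 0] nc by (simp add: a0_def)
  have il''lb: "ereal (16/15) \<le> inv_lam'' D 0" unfolding inv_lam''_def
  proof (rule INF_greatest)
    fix p assume "p \<in> {(a, b). a \<in> frontier D \<and> b \<in> frontier D \<and> dist 0 a = infdist 0 (frontier D)}"
    then obtain a b where p: "p = (a,b)" "a \<in> frontier D" "b \<in> frontier D"
      "dist 0 a = infdist 0 (frontier D)" by auto
    have aS: "a \<in> sphere c (1/5) \<union> {2 *\<^sub>R c}" "b \<in> sphere c (1/5) \<union> {2 *\<^sub>R c}"
      using FD p by (auto simp: q_def)
    have "norm a \<ge> 4/5"
    proof (cases "a = 2 *\<^sub>R c")
      case True thus ?thesis using nc by simp
    next
      case False thus ?thesis using aS sphere_facts[OF nc] by blast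
    qed
    hence "norm a = 4/5" using p(4) id by simp
    thus "ereal (16/15) \<le> Qfun 0 (fst p) (snd p)" using pair_lb2[OF nc aS] p by simp
  qed
  obtain y where y: "inv_lam' D 0 = ereal y" "101/100 \<le> y" "y < 102/100"
  proof -
    have "\<bar>inv_lam' D 0\<bar> \<noteq> \<infinity>" using il'lb il'ub by auto
    then obtain y where "inv_lam' D 0 = ereal y" by auto
    thus ?thesis using that il'lb il'ub na'lt by force
  qed
  have L': "lam' D 0 = ereal (1/y)" using y by (simp add: lam'_def divide_ereal_def one_ereal_def inverse_eq_divide)
  have "lam'' D 0 < lam' D 0"
  proof (cases "inv_lam'' D 0")
    case (real w)
    hence "16/15 \<le> w" using il''lb by simp
    hence "1/w < 1/y" using y by (intro divide_strict_left_mono) auto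
    moreover have "lam'' D 0 = ereal (1/w)" using real \<open>16/15 \<le> w\<close>
      by (simp add: lam''_def divide_ereal_def one_ereal_def inverse_eq_divide)
    ultimately show ?thesis using L' by simp
  next
    case PInf
    thus ?thesis using L' y by (simp add: lam''_def)
  next
    case MInf
    thus ?thesis using il''lb by simp
  qed
  moreover have "lam' D 0 < lam D 0"
  proof (cases "inv_lam D 0")
    case (real x)
    hence x: "0 \<le> x" "x \<le> 1" using il il0 by auto
    show ?thesis
    proof (cases "x = 0")
      case True
      hence "inv_lam D 0 = 0" using real by (simp add: zero_ereal_def)
      have h: "(1::ereal) / 0 = \<infinity>" by simp
      have "lam D 0 = \<infinity>" by (simp only: lam_def \<open>inv_lam D 0 = 0\<close> h)
      thus ?thesis using L' by simp
    next
      case False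
      hence "1 \<le> 1/x" using x by simp
      moreover have "1/y < 1" using y by simp
      moreover have "lam D 0 = ereal (1/x)" using real False
        by (simp add: lam_def divide_ereal_def one_ereal_def inverse_eq_divide)
      ultimately show ?thesis using L' by simp
    qed
  next
    case PInf thus ?thesis using il by simp
  next
    case MInf thus ?thesis using il0 by simp
  qed
  ultimately show ?thesis using dom cnD cq zD by blast
qed

end
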